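(* Consider the uplink system and the transmit-power minimization problem described in the context. Let $(\mathbf{x},\mathbf{y},\mathbf{W},\mathbf{p})$ be any point satisfying the constraints of that problem (with the antenna-moving-region constraints $0\le x_m\le x_{\max}$, $0\le y_n\le y_{\max}$ omitted, i.e. the region may be arbitrarily large), where every combining vector $\mathbf{w}_k$ is nonzero. Then for every user $k$, $1\le k\le K$, $$p_k\;\ge\;\bar p_k:=\frac{\sigma^2\,(2^{r_k}-1)}{MN\,\|\mathbf{b}_k\|_1^2}.$$
   Context: A base station (BS) has a cross-linked movable antenna array with $M$ columns and $N$ rows of antennas ($MN$ antennas). The horizontal antenna position vector (APV) is $\mathbf{x}=[x_1,\dots,x_M]^{\mathrm T}\in\mathbb{R}^M$ (horizontal coordinate of the $m$-th column), the vertical APV is $\mathbf{y}=[y_1,\dots,y_N]^{\mathrm T}\in\mathbb{R}^N$ (vertical coordinate of the $n$-th row); antenna $(m,n)$ sits at $(x_m,y_n)$. There are $K$ single-antenna users. User $k$ has $L_k$ channel paths with virtual angles $\vartheta_{k,\ell},\varphi_{k,\ell}\in[-1,1]$ and path-response vector $\mathbf{b}_k=[b_{k,1},\dots,b_{k,L_k}]^{\mathrm T}\in\mathbb{C}^{L_k}$, $\mathbf{b}_k\neq\mathbf{0}$; $\lambda>0$ is the wavelength. The channel $\mathbf{h}_k(\mathbf{x},\mathbf{y})\in\mathbb{C}^{MN}$ has entry indexed by $(m-1)N+n$ equal to $\sum_{\ell=1}^{L_k} b_{k,\ell}\,e^{-\mathrm{j}\frac{2\pi}{\lambda}(x_m\vartheta_{k,\ell}+y_n\varphi_{k,\ell})}$.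 With receive combining matrix $\mathbf{W}=[\mathbf{w}_1,\dots,\mathbf{w}_K]\in\mathbb{C}^{MN\times K}$, transmit powers $\mathbf{p}=(p_1,\dots,p_K)$ and noise power $\sigma^2>0$, the SINR of user $k$ is $$\gamma_k=\frac{|\mathbf{w}_k^{\mathrm H}\mathbf{h}_k(\mathbf{x},\mathbf{y})|^2p_k}{\sum_{q\ne k}|\mathbf{w}_k^{\mathrm H}\mathbf{h}_q(\mathbf{x},\mathbf{y})|^2p_q+\|\mathbf{w}_k\|_2^2\sigma^2}.$$ The problem is: minimize $\sum_{k=1}^K p_k$ over $\mathbf{x},\mathbf{y},\mathbf{W},\mathbf{p}$ subject to $\log_2(1+\gamma_k)\ge r_k$ and $p_k\ge0$ for all $k$ (given rate requirements $r_k\ge 0$), $0\le x_m\le x_{\max}$, $x_{m+1}-x_m\ge d_{\min,x}$ ($1\le m\le M-1$), $0\le y_n\le y_{\max}$, $y_{n+1}-y_n\ge d_{\min,y}$ ($1\le n\le N-1$), with given $d_{\min,x},d_{\min,y}>0$. $\|\cdot\|_1$ is the $\ell_1$ norm. *)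

theory Defs
  imports "HOL-Analysis.Analysis"
begin

text \<open>The MN-dimensional vectors are represented as functions
  of the pair (m,n); the entry (m-1)N+n corresponds to (m,n).\<close>

definition chan ::
  "(nat \<Rightarrow> nat) \<Rightarrow> (nat \<Rightarrow> nat \<Rightarrow> complex) \<Rightarrow> (nat \<Rightarrow> nat \<Rightarrow> real) \<Rightarrow>
   (nat \<Rightarrow> nat \<Rightarrow> real) \<Rightarrow> real \<Rightarrow> (nat \<Rightarrow> real) \<Rightarrow> (nat \<Rightarrow> real) \<Rightarrow>
   nat \<Rightarrow> nat \<Rightarrow> nat \<Rightarrow> complex" where
  "chan L b \<theta> \<phi> lam x y k m n =
     (\<Sum>l\<in>{1..L k}. b k l *
        exp (- \<i> * complex_of_real (2 * pi / lam * (x m * \<theta> k l + y n * \<phi> k l))))"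

definition herm_ip :: "nat \<Rightarrow> nat \<Rightarrow> (nat \<Rightarrow> nat \<Rightarrow> complex) \<Rightarrow> (nat \<Rightarrow> nat \<Rightarrow> complex) \<Rightarrow> complex" where
  "herm_ip M N w h = (\<Sum>m\<in>{1..M}. \<Sum>n\<in>{1..N}. cnj (w m n) * h m n)"

definition sqnorm :: "nat \<Rightarrow> nat \<Rightarrow> (nat \<Rightarrow> nat \<Rightarrow> complex) \<Rightarrow> real" where
  "sqnorm M N w = (\<Sum>m\<in>{1..M}. \<Sum>n\<in>{1..N}. (cmod (w m n))\<^sup>2)"

definition sinr ::
  "nat \<Rightarrow> nat \<Rightarrow> nat \<Rightarrow> (nat \<Rightarrow> nat \<Rightarrow> nat \<Rightarrow> complex) \<Rightarrow> (nat \<Rightarrow> nat \<Rightarrow> nat \<Rightarrow> complex) \<Rightarrow>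
   (nat \<Rightarrow> real) \<Rightarrow> real \<Rightarrow> nat \<Rightarrow> real" where
  "sinr M N K H W p \<sigma>2 k =
     (cmod (herm_ip M N (W k) (H k)))\<^sup>2 * p k /
     ((\<Sum>q\<in>{1..K} - {k}. (cmod (herm_ip M N (W k) (H q)))\<^sup>2 * p q) + sqnorm M N (W k) * \<sigma>2)"

end

theory Submission
  imports Defs
begin

lemma cs_complex:
  fixes w h :: "'a \<Rightarrow> complex"
  shows "(cmod (\<Sum>i\<in>I. cnj (w i) * h i))\<^sup>2 \<le> (\<Sum>i\<in>I. (cmod (w i))\<^sup>2) * (\<Sum>i\<in>I. (cmod (h i))\<^sup>2)"
proof -
  have "cmod (\<Sum>i\<in>I. cnj (w i) * h i) \<le> (\<Sum>i\<in>I. cmod (w i) * cmod (h i))"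
    by (rule order_trans[OF norm_sum]) (simp add: norm_mult)
  hence "(cmod (\<Sum>i\<in>I. cnj (w i) * h i))\<^sup>2 \<le> (\<Sum>i\<in>I. cmod (w i) * cmod (h i))\<^sup>2"
    by (simp add: power_mono)
  also have "\<dots> \<le> (\<Sum>i\<in>I. (cmod (w i))\<^sup>2) * (\<Sum>i\<in>I. (cmod (h i))\<^sup>2)"
    by (rule Cauchy_Schwarz_ineq_sum)
  finally show ?thesis .
qed

lemma cs_double:
  fixes w h :: "nat \<Rightarrow> nat \<Rightarrow> complex"
  shows "(cmod (herm_ip M N w h))\<^sup>2 \<le> sqnorm M N w * sqnorm M N h"
proof -
  have e1: "herm_ip M N w h = (\<Sum>(m,n)\<in>{1..M}\<times>{1..N}. cnj (w m n) * h m n)"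
    unfolding herm_ip_def by (rule sum.cartesian_product)
  have e2: "\<And>w. sqnorm M N w = (\<Sum>(m,n)\<in>{1..M}\<times>{1..N}. (cmod (w m n))\<^sup>2)"
    unfolding sqnorm_def by (rule sum.cartesian_product)
  show ?thesis
    using cs_complex[of "\<lambda>(m,n). w m n" "\<lambda>(m,n). h m n" "{1..M}\<times>{1..N}"]
    unfolding e1 e2 by (simp add: case_prod_unfold)
qed

lemma chan_bound:
  "cmod (chan L b \<theta> \<phi> lam x y k m n) \<le> (\<Sum>l\<in>{1..L k}. cmod (b k l))"
proof -
  have "cmod (chan L b \<theta> \<phi> lam x y k m n) \<le> (\<Sum>l\<in>{1..L k}. cmod (b k l *
        exp (- \<i> * complex_of_real (2 * pi / lam * (x m * \<theta> k l + y n * \<phi> k l)))))"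
    unfolding chan_def by (rule norm_sum)
  also have "\<dots> = (\<Sum>l\<in>{1..L k}. cmod (b k l))"
  proof (rule sum.cong)
    fix l
    have "cmod (exp (- \<i> * complex_of_real (2 * pi / lam * (x m * \<theta> k l + y n * \<phi> k l)))) = 1"
      by (simp add: norm_exp_eq_Re)
    thus "cmod (b k l * exp (- \<i> * complex_of_real (2 * pi / lam * (x m * \<theta> k l + y n * \<phi> k l)))) = cmod (b k l)"
      by (simp add: norm_mult)
  qed simp
  finally show ?thesis .
qed

lemma sqnorm_chan:
  "sqnorm M N (chan L b \<theta> \<phi> lam x y k) \<le> real M * real N * (\<Sum>l\<in>{1..L k}. cmod (b k l))\<^sup>2"
proof -
  have "sqnorm M N (chan L b \<theta> \<phi> lam x y k) \<le> (\<Sum>m\<in>{1..M}. \<Sum>n\<in>{1..N}. (\<Sum>l\<in>{1..L k}. cmod (b k l))\<^sup>2)"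
    unfolding sqnorm_def
    by (intro sum_mono power_mono chan_bound) auto
  thus ?thesis by simp
qed

lemma sqnorm_pos:
  assumes m: "m \<in> {1..M}" and n: "n \<in> {1..N}" and w: "w m n \<noteq> 0"
  shows "sqnorm M N w > 0"
proof -
  have "0 < (cmod (w m n))\<^sup>2" using w by simp
  hence a: "(\<Sum>j\<in>{1..N}. (cmod (w m j))\<^sup>2) > 0"
    using sum_pos2[of "{1..N}" n "\<lambda>j. (cmod (w m j))\<^sup>2"] n by simp
  have "(\<Sum>i\<in>{1..M}. \<Sum>j\<in>{1..N}. (cmod (w i j))\<^sup>2) > 0"
    using sum_pos2[of "{1..M}" m "\<lambda>i. \<Sum>j\<in>{1..N}. (cmod (w i j))\<^sup>2"] m a
    by (simp add: sum_nonneg)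
  thus ?thesis unfolding sqnorm_def .
qed

theorem theorem1:
  fixes M N K :: nat
    and L :: "nat \<Rightarrow> nat"
    and \<theta> \<phi> :: "nat \<Rightarrow> nat \<Rightarrow> real"
    and b :: "nat \<Rightarrow> nat \<Rightarrow> complex"
    and lam \<sigma>2 dminx dminy :: real
    and r :: "nat \<Rightarrow> real"
    and x y :: "nat \<Rightarrow> real"
    and W :: "nat \<Rightarrow> nat \<Rightarrow> nat \<Rightarrow> complex"
    and p :: "nat \<Rightarrow> real"
  assumes lam: "lam > 0"
    and sig: "\<sigma>2 > 0"
    and dx: "dminx > 0" and dy: "dminy > 0"
    and angles: "\<And>k l. k \<in> {1..K} \<Longrightarrow> l \<in> {1..L k} \<Longrightarrow>
                   \<theta> k l \<in> {-1..1} \<and> \<phi> k l \<in> {-1..1}"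
    and bnz: "\<And>k. k \<in> {1..K} \<Longrightarrow> \<exists>l\<in>{1..L k}. b k l \<noteq> 0"
    and rpos: "\<And>k. k \<in> {1..K} \<Longrightarrow> r k \<ge> 0"
    and rate: "\<And>k. k \<in> {1..K} \<Longrightarrow>
       log 2 (1 + sinr M N K (chan L b \<theta> \<phi> lam x y) W p \<sigma>2 k) \<ge> r k"
    and ppos: "\<And>k. k \<in> {1..K} \<Longrightarrow> p k \<ge> 0"
    and xsep: "\<And>m. m \<in> {1..M-1} \<Longrightarrow> x (m+1) - x m \<ge> dminx"
    and ysep: "\<And>n. n \<in> {1..N-1} \<Longrightarrow> y (n+1) - y n \<ge> dminy"
    and wnz: "\<And>k. k \<in> {1..K} \<Longrightarrow> \<exists>m\<in>{1..M}. \<exists>n\<in>{1..N}. W k m n \<noteq> 0"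
  shows "\<forall>k\<in>{1..K}. p k \<ge>
     \<sigma>2 * (2 powr r k - 1) / (real M * real N * (\<Sum>l\<in>{1..L k}. cmod (b k l))\<^sup>2)"
proof
  fix k assume k: "k \<in> {1..K}"
  define H where "H = chan L b \<theta> \<phi> lam x y"
  define S where "S = sinr M N K H W p \<sigma>2 k"
  define A where "A = (cmod (herm_ip M N (W k) (H k)))\<^sup>2"
  define I where "I = (\<Sum>q\<in>{1..K} - {k}. (cmod (herm_ip M N (W k) (H q)))\<^sup>2 * p q)"
  define nw where "nw = sqnorm M N (W k)"
  define nh where "nh = sqnorm M N (H k)"
  define D where "D = real M * real N * (\<Sum>l\<in>{1..L k}. cmod (b k l))\<^sup>2"
  have pk: "p k \<ge> 0" using ppos k by simp
  have I0: "I \<ge> 0" unfolding I_def using ppos by (intro sum_nonneg) auto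
  obtain m n where mn: "m \<in> {1..M}" "n \<in> {1..N}" "W k m n \<noteq> 0" using wnz[OF k] by blast
  have nw0: "nw > 0" unfolding nw_def using sqnorm_pos[of m M n N "W k"] mn by blast
  have A0: "A \<ge> 0" unfolding A_def by simp
  have CS: "A \<le> nw * nh" unfolding A_def nw_def nh_def by (rule cs_double)
  have nhD: "nh \<le> D" unfolding nh_def D_def H_def by (rule sqnorm_chan)
  have Sdef: "S = A * p k / (I + nw * \<sigma>2)"
    unfolding S_def sinr_def A_def I_def nw_def by simp
  have den: "I + nw * \<sigma>2 > 0" using I0 nw0 sig by (simp add: add_nonneg_pos)
  have S0: "S \<ge> 0" unfolding Sdef using A0 pk den by simp
  have "r k \<le> log 2 (1 + S)" using rate[OF k] unfolding S_def H_def .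
  hence "2 powr r k \<le> 1 + S" using S0 le_log_iff[of 2 "1 + S" "r k"] by simp
  hence g: "2 powr r k - 1 \<le> S" by simp
  have "S \<le> A * p k / (nw * \<sigma>2)"
    unfolding Sdef using A0 pk den I0 nw0 sig
    by (intro divide_left_mono mult_nonneg_nonneg) auto
  also have "\<dots> \<le> nw * nh * p k / (nw * \<sigma>2)"
    using CS pk nw0 sig by (intro divide_right_mono mult_right_mono) auto
  also have "\<dots> = nh * p k / \<sigma>2" using nw0 by simp
  also have "\<dots> \<le> D * p k / \<sigma>2"
    using nhD pk sig by (intro divide_right_mono mult_right_mono) auto
  finally have "2 powr r k - 1 \<le> D * p k / \<sigma>2" using g by linarith
  hence key: "\<sigma>2 * (2 powr r k - 1) \<le> D * p k" using sig by (simp add: field_simps)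
  show "p k \<ge> \<sigma>2 * (2 powr r k - 1) / D"
  proof (cases "D > 0")
    case True thus ?thesis using key by (simp add: divide_le_eq mult.commute)
  next
    case False
    have "D \<ge> 0" unfolding D_def by simp
    with False have "D = 0" by simp
    thus ?thesis using pk by simp
  qed
qed

end
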